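(* Let $T\in\mathcal{B}(\mathcal{H})$ be a self-adjoint operator which is the pencil of a pair of projections at $\lambda\in\mathbb{R}$ and the pencil of a pair of projections at $\mu\in\mathbb{R}$. If one of $\lambda$ and $\mu$ is zero, then the other belongs to $\{-1,0,1\}$.
   Context: $\mathcal{H}$ is an infinite-dimensional complex Hilbert space; "projection" means orthogonal projection. For $\lambda\in\mathbb{R}$, $T$ is the pencil of a pair of projections at $\lambda$ if $T=\lambda P+Q$ for some nonzero projections $P,Q\in\mathcal{B}(\mathcal{H})$. *)

theory Defs
  imports "HOL-Analysis.Analysis"
begin

class complex_hilbert = ab_group_add +
  fixes cscale :: "complex \<Rightarrow> 'a \<Rightarrow> 'a"
    and cinner :: "'a \<Rightarrow> 'a \<Rightarrow> complex"
  assumes cscale_add_right: "cscale a (x + y) = cscale a x + cscale a y"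
    and cscale_add_left: "cscale (a + b) x = cscale a x + cscale b x"
    and cscale_cscale: "cscale a (cscale b x) = cscale (a * b) x"
    and cscale_one: "cscale 1 x = x"
    and cinner_cnj_commute: "cinner x y = cnj (cinner y x)"
    and cinner_add_left: "cinner (x + y) z = cinner x z + cinner y z"
    and cinner_cscale_left: "cinner (cscale a x) y = cnj a * cinner x y"
    and cinner_nonneg: "0 \<le> Re (cinner x x)"
    and cinner_eq_zero: "cinner x x = 0 \<Longrightarrow> x = 0"
    and complete:
      "(\<forall>e>0. \<exists>N. \<forall>m\<ge>N. \<forall>n\<ge>N. sqrt (Re (cinner (X m - X n) (X m - X n))) < e)
        \<Longrightarrow> \<exists>L. (\<lambda>n. sqrt (Re (cinner (X n - L) (X n - L)))) \<longlonglongrightarrow> 0"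

definition hnorm :: "'a::complex_hilbert \<Rightarrow> real" where
  "hnorm x = sqrt (Re (cinner x x))"

definition finite_dimensional :: "'a::complex_hilbert itself \<Rightarrow> bool" where
  "finite_dimensional _ \<longleftrightarrow>
     (\<exists>S::'a set. finite S \<and> (\<forall>x. \<exists>c. x = (\<Sum>s\<in>S. cscale (c s) s)))"

definition bounded_op :: "('a::complex_hilbert \<Rightarrow> 'a) \<Rightarrow> bool" where
  "bounded_op T \<longleftrightarrow>
     (\<forall>x y. T (x + y) = T x + T y) \<and> (\<forall>a x. T (cscale a x) = cscale a (T x)) \<and>
     (\<exists>K. \<forall>x. hnorm (T x) \<le> K * hnorm x)"

definition self_adjoint :: "('a::complex_hilbert \<Rightarrow> 'a) \<Rightarrow> bool" where
  "self_adjoint T \<longleftrightarrow> (\<forall>x y. cinner (T x) y = cinner x (T y))"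

definition projection :: "('a::complex_hilbert \<Rightarrow> 'a) \<Rightarrow> bool" where
  "projection P \<longleftrightarrow> bounded_op P \<and> P \<circ> P = P \<and> self_adjoint P"

definition pencil_at :: "('a::complex_hilbert \<Rightarrow> 'a) \<Rightarrow> real \<Rightarrow> bool" where
  "pencil_at T l \<longleftrightarrow>
     (\<exists>P Q. projection P \<and> projection Q \<and> P \<noteq> (\<lambda>_. 0) \<and> Q \<noteq> (\<lambda>_. 0) \<and>
            T = (\<lambda>x. cscale (complex_of_real l) (P x) + Q x))"

end

theory Submission
  imports Defs
begin

interpretation cv: vector_space "cscale :: complex \<Rightarrow> 'a::complex_hilbert \<Rightarrow> 'a"
  by unfold_locales (simp_all add: cscale_add_right cscale_add_left cscale_cscale cscale_one)

lemma key:
  fixes P Q :: "'a::complex_hilbert \<Rightarrow> 'a" and c :: complex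
  assumes Padd: "\<And>x y. P (x + y) = P x + P y" and Psc: "\<And>a x. P (cscale a x) = cscale a (P x)"
    and Qadd: "\<And>x y. Q (x + y) = Q x + Q y" and Qsc: "\<And>a x. Q (cscale a x) = cscale a (Q x)"
    and PP: "\<And>x. P (P x) = P x" and QQ: "\<And>x. Q (Q x) = Q x"
    and TT: "\<And>x. cscale c (P (cscale c (P x) + Q x)) + Q (cscale c (P x) + Q x)
                 = cscale c (P x) + Q x"
    and c0: "c \<noteq> 0" and Pz: "P z \<noteq> 0"
  shows "c = 1 \<or> c = -1"
proof -
  have Pdiff: "P (x - y) = P x - P y" for x y using Padd[of "x - y" y] by (simp add: algebra_simps)
  have Qdiff: "Q (x - y) = Q x - Q y" for x y using Qadd[of "x - y" y] by (simp add: algebra_simps)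
  have E: "cscale (c*c) (P x) + cscale c (P (Q x)) + cscale c (Q (P x)) = cscale c (P x)" for x
    using TT[of x] by (simp add: Padd Qadd Psc Qsc PP QQ cv.scale_right_distrib algebra_simps)
  have F: "P (Q x) + Q (P x) = cscale (1 - c) (P x)" for x
  proof -
    have "cscale (inverse c) (cscale (c*c) (P x) + cscale c (P (Q x)) + cscale c (Q (P x)))
        = cscale (inverse c) (cscale c (P x))" using E[of x] by simp
    hence "cscale c (P x) + P (Q x) + Q (P x) = P x"
      using c0 by (simp add: cv.scale_right_distrib field_simps)
    thus ?thesis by (simp add: cv.scale_left_diff_distrib algebra_simps)
  qed
  define d where "d = (1 - c) / 2"
  have F1: "P (Q (P x)) + Q (P x) = cscale (1 - c) (P x)" for x using F[of "P x"] PP by simp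
  have F2: "P (Q x) + P (Q (P x)) = cscale (1 - c) (P x)" for x
    using arg_cong[OF F[of x], of P] by (simp add: Padd Psc PP)
  have F3: "P (Q (P x)) + P (Q (P x)) = cscale (1 - c) (P x)" for x
    using F2[of "P x"] PP by simp
  have PQP: "P (Q (P x)) = cscale d (P x)" for x
  proof -
    have "cscale (2::complex) (P (Q (P x))) = cscale (1 - c) (P x)"
      using F3[of x] by (simp add: cv.scale_left_distrib[of 1 1, simplified])
    hence "cscale (1/2) (cscale (2::complex) (P (Q (P x)))) = cscale (1/2) (cscale (1 - c) (P x))"
      by simp
    thus ?thesis by (simp add: d_def)
  qed
  have PQ: "P (Q x) = cscale d (P x)" for x
  proof -
    have "P (Q x) = cscale (1 - c) (P x) - cscale d (P x)" using F2[of x] PQP[of x]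
      by (simp add: algebra_simps)
    also have "\<dots> = cscale ((1 - c) - d) (P x)"
      by (simp add: cv.scale_left_diff_distrib)
    also have "(1 - c) - d = d" by (simp add: d_def field_simps)
    finally show ?thesis .
  qed
  have "cscale (d*d) (P z) = cscale d (P z)"
    using PQ[of "Q z"] PQ[of z] by (simp add: QQ Psc)
  hence "d*d = d" using Pz by simp
  hence "d = 0 \<or> d = 1" by (metis mult_cancel_right2 mult_eq_0_iff)  
  thus ?thesis unfolding d_def by (metis add_eq_0_iff divide_eq_0_iff eq_iff_diff_eq_0
      minus_diff_eq nonzero_eq_divide_eq zero_neq_numeral mult_1 one_add_one diff_add_cancel
      add_diff_cancel_left' add_uminus_conv_diff)
qed

theorem proposition3p1:
  fixes T :: "'a::complex_hilbert \<Rightarrow> 'a" and l m :: real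
  assumes "\<not> finite_dimensional TYPE('a)"
    and "bounded_op T" and "self_adjoint T"
    and "pencil_at T l" and "pencil_at T m"
    and "l = 0 \<or> m = 0"
  shows "(l = 0 \<longrightarrow> m \<in> {-1, 0, 1}) \<and> (m = 0 \<longrightarrow> l \<in> {-1, 0, 1})"
proof -
  have main: "r \<in> {-1, 0, 1}" if h0: "pencil_at T 0" and hr: "pencil_at T r" for r
  proof (cases "r = 0")
    case True thus ?thesis by simp
  next
    case False
    from h0 obtain P0 Q0 where Q0: "projection Q0" and T0: "T = (\<lambda>x. cscale (complex_of_real 0) (P0 x) + Q0 x)"
      unfolding pencil_at_def by blast
    have TQ: "T = Q0" using T0 by auto
    have TTx: "T (T x) = T x" for x using Q0 TQ unfolding projection_def by (metis comp_apply)
    from hr obtain P Q where P: "projection P" and Q: "projection Q" and Pn: "P \<noteq> (\<lambda>_. 0)"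
      and Tr: "T = (\<lambda>x. cscale (complex_of_real r) (P x) + Q x)"
      unfolding pencil_at_def by blast
    obtain z where z: "P z \<noteq> 0" using Pn by auto
    have "complex_of_real r = 1 \<or> complex_of_real r = -1"
    proof (rule key[where P=P and Q=Q and z=z])
      show "P (x + y) = P x + P y" "P (cscale a x) = cscale a (P x)"
           "Q (x + y) = Q x + Q y" "Q (cscale a x) = cscale a (Q x)" for x y a
        using P Q unfolding projection_def bounded_op_def by auto
      show "P (P x) = P x" "Q (Q x) = Q x" for x
        using P Q unfolding projection_def by (metis comp_apply)+
      show "cscale (complex_of_real r) (P (cscale (complex_of_real r) (P x) + Q x)) +
         Q (cscale (complex_of_real r) (P x) + Q x) = cscale (complex_of_real r) (P x) + Q x" for x
        using TTx[of x] Tr by simp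
    qed (use False z in auto)
    hence "r = 1 \<or> r = -1"
      by (metis of_real_1 of_real_eq_iff of_real_minus)
    thus ?thesis by auto
  qed
  show ?thesis using main assms(4,5) by auto
qed

end
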